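(* Let $\mathcal A=(Q,d,T_u,T_f,T_s,\emptyset)$ be an ABVASS, $q_r\in Q$, $\vec v_0\in\mathbb N^d$ and $Q_\ell\subseteq Q$. If $\mathcal A$ has a $(q_r,\vec v_0)$-rooted $Q_\ell$-leaf-covering deduction tree, then it has such a deduction tree of height at most $H(d,|Q|,\max^-(T_u))$.
   Context: An ABVASS is a tuple $\mathcal A=(Q,d,T_u,T_f,T_s,\emptyset)$ with $Q$ a finite set of states, $d\in\mathbb N$, and finite sets of unary rules $T_u\subseteq Q\times\mathbb Z^d\times Q$, fork rules $T_f\subseteq Q^3$, split rules $T_s\subseteq Q^3$. A deduction tree is a finite tree labelled by configurations $(q,\vec v)\in Q\times\mathbb N^d$ where each internal node $(q,\vec v)$ has either one child $(q_1,\vec v+\vec u)\in Q\times\mathbb N^d$ for a unary rule $(q,\vec u,q_1)$, two children $(q_1,\vec v),(q_2,\vec v)$ for a fork rule $(q,q_1,q_2)$, or two children $(q_1,\vec v_1),(q_2,\vec v_2)$ with $\vec v_1+\vec v_2=\vec v$ for a split rule $(q,q_1,q_2)$. It is $(q_r,\vec v_0)$-rooted if its root is labelled $(q_r,\vec v_0)$, $Q_\ell$-leaf-covering if every leaf label $(q,\vec v)$ has $q\in Q_\ell$ (no condition on $\vec v$), and its height is the maximum number of edges on a root-to-leaf path. $\max^-(T_u)$ is the largest absolute value of a negative integer occurring in a vector of $T_u$ (and $0$ if there is none). For integers $d,m\ge0$, $s\ge1$: $H(0,s,m)=s$ and $H(d+1,s,m)=s\,(m\cdot 2^{H(d,s,m)})^{d+1}+H(d,s,m)$.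 *)

theory Defs
  imports Main
begin

text \<open>ABVASS without the (here empty) last component. Vectors in Z^d / N^d are
  lists of length d.\<close>

record 'q abvass =
  states :: "'q set"
  dim    :: nat
  unary  :: "('q \<times> int list \<times> 'q) set"
  fork   :: "('q \<times> 'q \<times> 'q) set"
  split  :: "('q \<times> 'q \<times> 'q) set"

definition wf_abvass :: "'q abvass \<Rightarrow> bool" where
  "wf_abvass A \<longleftrightarrow> finite (states A)
     \<and> finite (unary A) \<and> finite (fork A) \<and> finite (split A)
     \<and> (\<forall>(q,u,q1)\<in>unary A. q \<in> states A \<and> q1 \<in> states A \<and> length u = dim A)
     \<and> (\<forall>(q,q1,q2)\<in>fork A. q \<in> states A \<and> q1 \<in> states A \<and> q2 \<in> states A)
     \<and> (\<forall>(q,q1,q2)\<in>split A. q \<in> states A \<and> q1 \<in> states A \<and> q2 \<in> states A)"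

datatype 'q dtree = Node "'q \<times> nat list" "'q dtree list"

fun label :: "'q dtree \<Rightarrow> 'q \<times> nat list" where
  "label (Node l cs) = l"

definition vadd :: "nat list \<Rightarrow> int list \<Rightarrow> int list" where
  "vadd v u = map2 (\<lambda>a b. int a + b) v u"

definition is_config :: "'q abvass \<Rightarrow> 'q \<times> nat list \<Rightarrow> bool" where
  "is_config A c \<longleftrightarrow> fst c \<in> states A \<and> length (snd c) = dim A"

definition step_ok :: "'q abvass \<Rightarrow> 'q \<times> nat list \<Rightarrow> ('q \<times> nat list) list \<Rightarrow> bool" where
  "step_ok A c ls \<longleftrightarrow>
     (case ls of
        [] \<Rightarrow> True
      | [c1] \<Rightarrow> (\<exists>u. (fst c, u, fst c1) \<in> unary A \<and> map int (snd c1) = vadd (snd c) u)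
      | [c1, c2] \<Rightarrow>
          ((fst c, fst c1, fst c2) \<in> fork A \<and> snd c1 = snd c \<and> snd c2 = snd c)
          \<or> ((fst c, fst c1, fst c2) \<in> split A \<and> map2 (+) (snd c1) (snd c2) = snd c)
      | _ \<Rightarrow> False)"

fun deduction_tree :: "'q abvass \<Rightarrow> 'q dtree \<Rightarrow> bool" where
  "deduction_tree A (Node c cs) \<longleftrightarrow>
     is_config A c \<and> step_ok A c (map label cs) \<and> (\<forall>t\<in>set cs. deduction_tree A t)"

fun leaf_covering :: "'q set \<Rightarrow> 'q dtree \<Rightarrow> bool" where
  "leaf_covering Ql (Node c cs) \<longleftrightarrow>
     (if cs = [] then fst c \<in> Ql else (\<forall>t\<in>set cs. leaf_covering Ql t))"

fun height :: "'q dtree \<Rightarrow> nat" where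
  "height (Node c cs) = (if cs = [] then 0 else Suc (fold max (map height cs) 0))"

definition max_neg :: "'q abvass \<Rightarrow> nat" where
  "max_neg A = Max (insert 0 {nat (- x) | x q u q1. (q, u, q1) \<in> unary A \<and> x \<in> set u \<and> x < 0})"

fun H :: "nat \<Rightarrow> nat \<Rightarrow> nat \<Rightarrow> nat" where
  "H 0 s m = s"
| "H (Suc d) s m = s * (m * 2 ^ H d s m) ^ (d + 1) + H d s m"

end

theory Submission
  imports Defs "HOL-Library.FuncSet"
begin

definition liftu :: "int list \<Rightarrow> nat \<Rightarrow> int" where
  "liftu u i = (if i < length u then u!i else 0)"
definition normJ :: "nat set \<Rightarrow> (nat \<Rightarrow> int) \<Rightarrow> nat \<Rightarrow> int" where
  "normJ J f i = (if i \<in> J then f i else 0)"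
definition validJ :: "'q abvass \<Rightarrow> nat set \<Rightarrow> 'q \<Rightarrow> (nat \<Rightarrow> int) \<Rightarrow> bool" where
  "validJ A J q v \<longleftrightarrow> q \<in> states A \<and> (\<forall>i\<in>J. 0 \<le> v i) \<and> (\<forall>i. i \<notin> J \<longrightarrow> v i = 0)"

inductive T :: "'q abvass \<Rightarrow> 'q set \<Rightarrow> nat set \<Rightarrow> nat \<Rightarrow> 'q \<Rightarrow> (nat \<Rightarrow> int) \<Rightarrow> bool"
  for A Ql J where
  leaf: "validJ A J q v \<Longrightarrow> q \<in> Ql \<Longrightarrow> T A Ql J n q v"
| un: "validJ A J q v \<Longrightarrow> (q,u,q1) \<in> unary A \<Longrightarrow> T A Ql J n q1 (normJ J (\<lambda>i. v i + liftu u i))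
       \<Longrightarrow> T A Ql J (Suc n) q v"
| fk: "validJ A J q v \<Longrightarrow> (q,q1,q2) \<in> fork A \<Longrightarrow> T A Ql J n q1 v \<Longrightarrow> T A Ql J n q2 v
       \<Longrightarrow> T A Ql J (Suc n) q v"
| sp: "validJ A J q v \<Longrightarrow> (q,q1,q2) \<in> split A \<Longrightarrow> T A Ql J n q1 v1 \<Longrightarrow> T A Ql J n q2 v2
       \<Longrightarrow> \<forall>i. v1 i + v2 i = v i \<Longrightarrow> T A Ql J (Suc n) q v"

lemma T_valid: "T A Ql J n q v \<Longrightarrow> validJ A J q v"
  by (induction rule: T.induct) auto

lemma T_mono: "T A Ql J n q v \<Longrightarrow> n \<le> n' \<Longrightarrow> T A Ql J n' q v"
proof (induction arbitrary: n' rule: T.induct)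
  case (leaf q v n) then show ?case by (auto intro: T.leaf)
next
  case (un q v u q1 n)
  then obtain k where "n' = Suc k" "n \<le> k" by (cases n') auto
  with un show ?case by (auto intro: T.un)
next
  case (fk q v q1 q2 n)
  then obtain k where "n' = Suc k" "n \<le> k" by (cases n') auto
  with fk show ?case by (auto intro: T.fk)
next
  case (sp q v q1 q2 n v1 v2)
  then obtain k where "n' = Suc k" "n \<le> k" by (cases n') auto
  with sp show ?case by (auto intro: T.sp)
qed

lemma T_restrict: "T A Ql J n q v \<Longrightarrow> J' \<subseteq> J \<Longrightarrow> T A Ql J' n q (normJ J' v)"
proof (induction rule: T.induct)
  case (leaf q v n) then show ?case by (intro T.leaf) (auto simp: validJ_def normJ_def)
next
  case (un q v u q1 n)
  have e: "normJ J' (normJ J (\<lambda>i. v i + liftu u i)) = normJ J' (\<lambda>i. normJ J' v i + liftu u i)"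
    using un.prems by (auto simp: normJ_def fun_eq_iff)
  have c: "T A Ql J' n q1 (normJ J' (normJ J (\<lambda>i. v i + liftu u i)))" using un.IH un.prems .
  have c2: "T A Ql J' n q1 (normJ J' (\<lambda>i. normJ J' v i + liftu u i))" using c unfolding e .
  show ?case apply (rule T.un[OF _ un(2) c2])
    using un by (auto simp: validJ_def normJ_def)
next
  case (fk q v q1 q2 n)
  then show ?case by (intro T.fk[OF _ fk(2)]) (auto simp: validJ_def normJ_def)
next
  case (sp q v q1 q2 n v1 v2)
  show ?case apply (rule T.sp[OF _ sp(2) sp(6) sp(7)])
    using sp by (auto simp: validJ_def normJ_def)
qed

lemma T_recoord:
  assumes "T A Ql J' n q v" "j \<notin> J'" "int m * (2 ^ n - 1) \<le> x"
    and ub: "\<And>q u q1 i. (q,u,q1) \<in> unary A \<Longrightarrow> - int m \<le> liftu u i"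
  shows "T A Ql (insert j J') n q (v(j := x))"
  using assms(1-3)
proof (induction arbitrary: x rule: T.induct)
  case (leaf q v n)
  have "0 \<le> int m * (2 ^ n - 1)" by simp
  hence "0 \<le> x" using leaf.prems(2) by linarith
  then show ?case using leaf by (intro T.leaf) (auto simp: validJ_def)
next
  case (un q v u q1 n)
  have "(1::int) \<le> 2^n" by simp
  hence "int m \<le> int m * 2^n" by (simp add: mult_le_cancel_left1)
  moreover have "- int m \<le> liftu u j" using ub un(2) by blast
  ultimately have "int m * (2 ^ n - 1) \<le> x + liftu u j" using un.prems
    by (simp add: algebra_simps)
  from un.IH[OF un.prems(1) this]
  have c: "T A Ql (insert j J') n q1 ((normJ J' (\<lambda>i. v i + liftu u i))(j := x + liftu u j))" .
  have e: "(normJ J' (\<lambda>i. v i + liftu u i))(j := x + liftu u j)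
      = normJ (insert j J') (\<lambda>i. (v(j:=x)) i + liftu u i)"
    by (auto simp: normJ_def)
  have "0 \<le> int m * (2 ^ Suc n - 1)" by simp
  hence "0 \<le> x" using un.prems(2) by linarith
  then show ?case using un.hyps(1) un.prems c e
    by (intro T.un[OF _ un(2)]) (auto simp: validJ_def)
next
  case (fk q v q1 q2 n)
  have one: "(1::int) \<le> 2^n" by simp
  have "(2::int) ^ Suc n = 2 * 2^n" by simp
  hence "(2::int) ^ n - 1 \<le> 2 ^ Suc n - 1" using one by linarith
  hence "int m * (2 ^ n - 1) \<le> int m * (2 ^ Suc n - 1)" by (rule mult_left_mono) simp
  hence x: "int m * (2 ^ n - 1) \<le> x" using fk.prems by simp
  have "0 \<le> int m * (2 ^ Suc n - 1)" by simp
  hence "0 \<le> x" using fk.prems(2) by linarith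
  then show ?case using fk x by (intro T.fk[OF _ fk(2)]) (auto simp: validJ_def)
next
  case (sp q v q1 q2 n v1 v2)
  define c where "c = int m * (2 ^ n - 1)"
  have "int m * (2 ^ Suc n - 1) = 2 * c + int m" by (simp add: c_def algebra_simps)
  hence x: "2 * c \<le> x" using sp.prems by simp
  have c0: "0 \<le> c" by (simp add: c_def)
  have t1: "T A Ql (insert j J') n q1 (v1(j := x - c))" using sp x c0 by (intro sp.IH) (auto simp: c_def)
  have t2: "T A Ql (insert j J') n q2 (v2(j := c))" using sp by (intro sp.IH) (auto simp: c_def)
  have "0 \<le> int m * (2 ^ Suc n - 1)" by simp
  hence "0 \<le> x" using sp.prems(2) by linarith
  then show ?case using sp(1,2,5) sp.prems t1 t2 by (intro T.sp[OF _ sp(2) t1 t2]) (auto simp: validJ_def)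
qed

lemma stab:
  fixes P :: "nat \<Rightarrow> 'a set"
  assumes fin: "finite C" and sub: "\<And>n. P n \<subseteq> C" and mono: "\<And>n. P n \<subseteq> P (Suc n)"
    and st: "\<And>n. P n = P (Suc n) \<Longrightarrow> P (Suc n) = P (Suc (Suc n))"
  shows "P n \<subseteq> P (card C)"
proof -
  have prp: "P k = P (Suc k)" if "P n = P (Suc n)" "n \<le> k" for n k
    using that(2,1)
  proof (induction k rule: dec_induct)
    case base then show ?case by assumption
  next
    case (step k) then show ?case by (intro st) blast
  qed
  have grow: "(\<forall>i<k. P i \<noteq> P (Suc i)) \<Longrightarrow> k \<le> card (P k)" for k
  proof (induction k)
    case 0 then show ?case by simp
  next
    case (Suc k)
    have "P k \<noteq> P (Suc k)" using Suc.prems by blast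
    hence "P k \<subset> P (Suc k)" using mono[of k] by blast
    moreover have "finite (P (Suc k))" using fin sub finite_subset by blast
    ultimately have "card (P k) < card (P (Suc k))" by (rule psubset_card_mono[rotated])
    moreover have "k \<le> card (P k)" using Suc.IH Suc.prems by simp
    ultimately show ?case by simp
  qed
  have mons: "i \<le> j \<Longrightarrow> P i \<subseteq> P j" for i j
    using lift_Suc_mono_le[of P, OF mono] by blast
  let ?N = "card C"
  have eqN: "P ?N = P (Suc ?N)"
  proof (rule ccontr)
    assume ne: "P ?N \<noteq> P (Suc ?N)"
    have "\<forall>i<Suc ?N. P i \<noteq> P (Suc i)"
    proof (intro allI impI notI)
      fix i assume "i < Suc ?N" "P i = P (Suc i)"
      then show False using prp[of i ?N] ne by linarith
    qed
    hence "Suc ?N \<le> card (P (Suc ?N))" by (rule grow)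
    moreover have "card (P (Suc ?N)) \<le> ?N" using fin sub card_mono by blast
    ultimately show False by simp
  qed
  show ?thesis
  proof (cases "n \<le> ?N")
    case True then show ?thesis by (rule mons)
  next
    case False
    have eqk: "P k = P ?N" if "?N \<le> k" for k
      using that
    proof (induction k rule: dec_induct)
      case (step k)
      have "P k = P (Suc k)" using prp[OF eqN, of k] step(1) by blast
      then show ?case using step(3) by (metis)
    qed simp
    have "P n = P ?N" using eqk[of n] False by linarith
    then show ?thesis by (rule equalityD1)
  qed
qed

lemma T_step:
  assumes "T A Ql J (Suc k) q v" "\<And>q' v'. T A Ql J k q' v' \<Longrightarrow> T A Ql J k' q' v'"
  shows "T A Ql J (Suc k') q v"
  using assms(1)
proof (cases rule: T.cases)
  case leaf then show ?thesis by (auto intro: T.leaf)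
next
  case (un u q1) then show ?thesis using assms(2) by (auto intro: T.un)
next
  case (fk q1 q2) then show ?thesis using assms(2) by (auto intro: T.fk)
next
  case (sp q1 q2 v1 v2) then show ?thesis using assms(2) by (auto intro: T.sp)
qed

lemma card_V:
  fixes B :: nat
  assumes "finite J"
  shows "finite {v :: nat \<Rightarrow> int. (\<forall>i\<in>J. 0 \<le> v i \<and> v i < int B) \<and> (\<forall>i. i \<notin> J \<longrightarrow> v i = 0)}
     \<and> card {v :: nat \<Rightarrow> int. (\<forall>i\<in>J. 0 \<le> v i \<and> v i < int B) \<and> (\<forall>i. i \<notin> J \<longrightarrow> v i = 0)} \<le> B ^ card J"
proof -
  let ?V = "{v :: nat \<Rightarrow> int. (\<forall>i\<in>J. 0 \<le> v i \<and> v i < int B) \<and> (\<forall>i. i \<notin> J \<longrightarrow> v i = 0)}"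
  let ?g = "\<lambda>f i. if i \<in> J then f i else (0::int)"
  have "?V \<subseteq> ?g ` (PiE J (\<lambda>_. {0..<int B}))"
  proof
    fix v assume v: "v \<in> ?V"
    have "v = ?g (restrict v J)" using v by (auto simp: fun_eq_iff)
    moreover have "restrict v J \<in> PiE J (\<lambda>_. {0..<int B})" using v by auto
    ultimately show "v \<in> ?g ` (PiE J (\<lambda>_. {0..<int B}))" by blast
  qed
  moreover have fP: "finite (PiE J (\<lambda>_. {0..<int B}))" using assms by (simp add: finite_PiE)
  ultimately have "finite ?V" "card ?V \<le> card (?g ` (PiE J (\<lambda>_. {0..<int B})))"
    by (auto intro: finite_subset card_mono)
  moreover have "card (?g ` (PiE J (\<lambda>_. {0..<int B}))) \<le> card (PiE J (\<lambda>_. {0..<int B}))"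
    using fP by (rule card_image_le)
  moreover have "card (PiE J (\<lambda>_. {0..<int B})) = B ^ card J" using assms by (simp add: card_PiE)
  ultimately show ?thesis by simp
qed

lemma T_general:
  assumes fs: "finite (states A)" and fJ: "finite J"
    and large: "\<And>q v n. T A Ql J n q v \<Longrightarrow> (\<exists>j\<in>J. int B \<le> v j) \<Longrightarrow> T A Ql J h0 q v"
    and t: "T A Ql J n q v"
  shows "T A Ql J (h0 + card (states A) * B ^ card J) q v"
proof -
  define V where "V = {v :: nat \<Rightarrow> int. (\<forall>i\<in>J. 0 \<le> v i \<and> v i < int B) \<and> (\<forall>i. i \<notin> J \<longrightarrow> v i = 0)}"
  define C where "C = states A \<times> V"
  define P where "P k = {(q,v). T A Ql J (h0 + k) q v \<and> (\<forall>i\<in>J. v i < int B)}" for k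
  have fV: "finite V" and cV: "card V \<le> B ^ card J" using card_V[OF fJ, of B] by (auto simp: V_def)
  have fC: "finite C" using fs fV by (simp add: C_def)
  have cC: "card C \<le> card (states A) * B ^ card J"
    using cV by (simp add: C_def card_cartesian_product)
  have sub: "P k \<subseteq> C" for k
  proof
    fix c assume "c \<in> P k"
    then obtain q v where "c = (q,v)" "T A Ql J (h0 + k) q v" "\<forall>i\<in>J. v i < int B" by (auto simp: P_def)
    then show "c \<in> C" using T_valid[of A Ql J "h0+k" q v] by (auto simp: C_def V_def validJ_def)
  qed
  have mono: "P k \<subseteq> P (Suc k)" for k
    unfolding P_def using T_mono[of A Ql J "h0 + k" _ _ "h0 + Suc k"] by auto
  have st: "P (Suc k) = P (Suc (Suc k))" if eq: "P k = P (Suc k)" for k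
  proof
    show "P (Suc k) \<subseteq> P (Suc (Suc k))" by (rule mono)
  next
    show "P (Suc (Suc k)) \<subseteq> P (Suc k)"
    proof
      fix c assume "c \<in> P (Suc (Suc k))"
      then obtain q v where c: "c = (q,v)" and tq: "T A Ql J (Suc (h0 + Suc k)) q v"
        and sm: "\<forall>i\<in>J. v i < int B" by (auto simp: P_def)
      have child: "T A Ql J (h0 + k) q' v'" if "T A Ql J (h0 + Suc k) q' v'" for q' v'
      proof (cases "\<exists>j\<in>J. int B \<le> v' j")
        case True
        then show ?thesis using T_mono[OF large[OF that], of "h0 + k"] by auto
      next
        case False
        hence "(q',v') \<in> P (Suc k)" using that by (auto simp: P_def not_le)
        hence "(q',v') \<in> P k" using eq by simp
        then show ?thesis by (simp add: P_def)
      qed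
      have "T A Ql J (Suc (h0 + k)) q v" by (rule T_step[OF tq child])
      then show "c \<in> P (Suc k)" using c sm by (simp add: P_def)
    qed
  qed
  have key: "P n \<subseteq> P (card C)" by (rule stab[of C P, OF fC sub mono st])
  show ?thesis
  proof (cases "\<exists>j\<in>J. int B \<le> v j")
    case True
    then show ?thesis using T_mono[OF large[OF t], of "h0 + card (states A) * B ^ card J"] by auto
  next
    case False
    hence "(q,v) \<in> P n" using t T_mono[OF t, of "h0 + n"] by (auto simp: P_def not_le)
    hence "(q,v) \<in> P (card C)" using key by blast
    hence "T A Ql J (h0 + card C) q v" by (simp add: P_def)
    then show ?thesis by (rule T_mono) (use cC in simp)
  qed
qed

lemma T_main:
  assumes fs: "finite (states A)"
    and ub: "\<And>q u q1 i. (q,u,q1) \<in> unary A \<Longrightarrow> - int m \<le> liftu u i"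
  shows "finite J \<Longrightarrow> card J = k \<Longrightarrow> T A Ql J n q v \<Longrightarrow> T A Ql J (H k (card (states A)) m) q v"
proof (induction k arbitrary: J n q v)
  case 0
  hence J: "J = {}" by simp
  have "T A Ql J (0 + card (states A) * 1 ^ card J) q v"
    by (rule T_general[OF fs 0(1) _ 0(3)]) (simp add: J)
  then show ?case by (simp add: J)
next
  case (Suc k)
  let ?h = "H k (card (states A)) m"
  let ?B = "m * 2 ^ ?h"
  have large: "T A Ql J ?h q' v'" if t: "T A Ql J n' q' v'" and lj: "\<exists>j\<in>J. int ?B \<le> v' j" for n' q' v'
  proof -
    obtain j where j: "j \<in> J" "int ?B \<le> v' j" using lj by blast
    define J' where "J' = J - {j}"
    have fJ': "finite J'" "card J' = k" using Suc.prems j by (auto simp: J'_def)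
    have r: "T A Ql J' n' q' (normJ J' v')" by (rule T_restrict[OF t]) (auto simp: J'_def)
    have r2: "T A Ql J' ?h q' (normJ J' v')" by (rule Suc.IH[OF fJ' r])
    have "int m * (2 ^ ?h - 1) \<le> int ?B" by (simp add: algebra_simps)
    hence x: "int m * (2 ^ ?h - 1) \<le> v' j" using j by linarith
    have r3: "T A Ql (insert j J') ?h q' ((normJ J' v')(j := v' j))"
      by (rule T_recoord[OF r2 _ x ub]) (auto simp: J'_def)
    have v0: "\<forall>i. i \<notin> J \<longrightarrow> v' i = 0" using T_valid[OF t] by (simp add: validJ_def)
    have "(normJ J' v')(j := v' j) = v'" using v0 by (auto simp: fun_eq_iff normJ_def J'_def)
    moreover have "insert j J' = J" using j by (auto simp: J'_def)
    ultimately show ?thesis using r3 by simp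
  qed
  have "T A Ql J (?h + card (states A) * ?B ^ card J) q v"
    by (rule T_general[OF fs Suc.prems(1) large Suc.prems(3)])
  then show ?case using Suc.prems(2) by (simp add: add.commute)
qed

definition lift :: "nat list \<Rightarrow> nat \<Rightarrow> int" where
  "lift v i = (if i < length v then int (v!i) else 0)"
definition unlift :: "nat \<Rightarrow> (nat \<Rightarrow> int) \<Rightarrow> nat list" where
  "unlift d v = map (\<lambda>i. nat (v i)) [0..<d]"

lemma to_T:
  assumes wf: "wf_abvass A"
  shows "deduction_tree A t \<Longrightarrow> leaf_covering Ql t \<Longrightarrow> label t = (q,v)
     \<Longrightarrow> T A Ql {..<dim A} (height t) q (lift v)"
proof (induction t arbitrary: q v)
  case (Node c cs)
  have c: "c = (q,v)" using Node.prems by simp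
  have cfg: "q \<in> states A" "length v = dim A" using Node.prems c by (auto simp: is_config_def)
  have val: "validJ A {..<dim A} q (lift v)" using cfg by (auto simp: validJ_def lift_def)
  have sok: "step_ok A (q,v) (map label cs)" using Node.prems c by simp
  have subs: "\<And>t. t \<in> set cs \<Longrightarrow> deduction_tree A t \<and> leaf_covering Ql t" using Node.prems by (auto split: if_splits)
  have IH: "\<And>t q' v'. t \<in> set cs \<Longrightarrow> label t = (q',v') \<Longrightarrow> T A Ql {..<dim A} (height t) q' (lift v')"
    using Node.IH subs by blast
  have lenc: "\<And>t q' v'. t \<in> set cs \<Longrightarrow> label t = (q',v') \<Longrightarrow> length v' = dim A"
  proof -
    fix t q' v' assume "t \<in> set cs" "label t = (q',v')"
    hence "deduction_tree A t" using subs by blast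
    then show "length v' = dim A" using \<open>label t = (q',v')\<close> by (cases t) (auto simp: is_config_def)
  qed
  show ?case
  proof (cases cs)
    case Nil
    then show ?thesis using Node.prems c val by (intro T.leaf) auto
  next
    case (Cons t1 rest)
    obtain q1 v1 where l1: "label t1 = (q1,v1)" by fastforce
    have t1: "t1 \<in> set cs" using Cons by simp
    have len1: "length v1 = dim A" using lenc[OF t1 l1] .
    have IH1: "T A Ql {..<dim A} (height t1) q1 (lift v1)" using IH[OF t1 l1] .
    show ?thesis
    proof (cases rest)
      case Nil
      from sok obtain u where u: "(q,u,q1) \<in> unary A" "map int v1 = vadd v u"
        using Cons Nil l1 by (auto simp: step_ok_def)
      have lu: "length u = dim A" using wf u(1) by (auto simp: wf_abvass_def)
      have e: "lift v1 = normJ {..<dim A} (\<lambda>i. lift v i + liftu u i)"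
      proof
        fix i
        show "lift v1 i = normJ {..<dim A} (\<lambda>i. lift v i + liftu u i) i"
        proof (cases "i < dim A")
          case True
          have "int (v1 ! i) = map int v1 ! i" using True len1 by simp
          also have "\<dots> = int (v ! i) + u ! i" using u(2) True cfg lu by (simp add: vadd_def)
          finally show ?thesis using True len1 cfg lu by (simp add: lift_def liftu_def normJ_def)
        qed (simp add: lift_def normJ_def len1)
      qed
      have "height (Node c cs) = Suc (height t1)" using Cons Nil by simp
      then show ?thesis using Cons Nil Node.prems IH1 e val u(1)
        by (auto intro: T.un)
    next
      case (Cons t2 rest2)
      note C1 = \<open>cs = t1 # rest\<close>
      obtain q2 v2 where l2: "label t2 = (q2,v2)" by fastforce
      have t2: "t2 \<in> set cs" using C1 Cons by simp
      have len2: "length v2 = dim A" using lenc[OF t2 l2] .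
      have IH2: "T A Ql {..<dim A} (height t2) q2 (lift v2)" using IH[OF t2 l2] .
      show ?thesis
      proof (cases rest2)
        case (Cons t3 r3)
        then show ?thesis using sok C1 \<open>rest = t2 # rest2\<close> by (simp add: step_ok_def)
      next
        case Nil
        have ht: "height (Node c cs) = Suc (max (height t2) (max (height t1) 0))"
          using C1 \<open>rest = t2 # rest2\<close> Nil by simp
        define h where "h = max (height t2) (max (height t1) 0)"
        have T1: "T A Ql {..<dim A} h q1 (lift v1)" using IH1 by (rule T_mono) (simp add: h_def)
        have T2: "T A Ql {..<dim A} h q2 (lift v2)" using IH2 by (rule T_mono) (simp add: h_def)
        have sok2: "((q,q1,q2) \<in> fork A \<and> v1 = v \<and> v2 = v)
           \<or> ((q,q1,q2) \<in> split A \<and> map2 (+) v1 v2 = v)"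
          using sok C1 \<open>rest = t2 # rest2\<close> Nil l1 l2 by (simp add: step_ok_def)
        then show ?thesis
        proof
          assume f: "(q,q1,q2) \<in> fork A \<and> v1 = v \<and> v2 = v"
          show ?thesis unfolding ht h_def[symmetric] using f T1 T2 val by (auto intro: T.fk)
        next
          assume s: "(q,q1,q2) \<in> split A \<and> map2 (+) v1 v2 = v"
          have sum: "\<forall>i. lift v1 i + lift v2 i = lift v i"
          proof
            fix i
            show "lift v1 i + lift v2 i = lift v i"
            proof (cases "i < dim A")
              case True
              have "v ! i = v1 ! i + v2 ! i" using s True len1 len2 by auto
              then show ?thesis using True len1 len2 cfg by (simp add: lift_def)
            qed (simp add: lift_def len1 len2 cfg)
          qed
          have sr: "(q,q1,q2) \<in> split A" using s by simp
          show ?thesis unfolding ht h_def[symmetric] by (rule T.sp[OF val sr T1 T2 sum])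
        qed
      qed
    qed
  qed
qed

lemma from_T:
  assumes wf: "wf_abvass A"
  shows "T A Ql J n q v \<Longrightarrow> J = {..<dim A} \<Longrightarrow>
    \<exists>t. deduction_tree A t \<and> label t = (q, unlift (dim A) v) \<and> leaf_covering Ql t \<and> height t \<le> n"
proof (induction rule: T.induct)
  case (leaf q v n)
  then show ?case
    by (intro exI[of _ "Node (q, unlift (dim A) v) []"]) (auto simp: is_config_def validJ_def unlift_def step_ok_def)
next
  case (un q v u q1 n)
  then obtain t1 where t1: "deduction_tree A t1" "label t1 = (q1, unlift (dim A) (normJ J (\<lambda>i. v i + liftu u i)))"
    "leaf_covering Ql t1" "height t1 \<le> n" by blast
  have lu: "length u = dim A" using wf un(2) by (auto simp: wf_abvass_def)
  have vc: "validJ A J q1 (normJ J (\<lambda>i. v i + liftu u i))" using un(3) by (rule T_valid)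
  have vv: "validJ A J q v" by fact
  have "map int (unlift (dim A) (normJ J (\<lambda>i. v i + liftu u i))) = vadd (unlift (dim A) v) u"
  proof (rule nth_equalityI)
    show "length (map int (unlift (dim A) (normJ J (\<lambda>i. v i + liftu u i)))) = length (vadd (unlift (dim A) v) u)"
      by (simp add: unlift_def vadd_def lu)
  next
    fix i assume "i < length (map int (unlift (dim A) (normJ J (\<lambda>i. v i + liftu u i))))"
    hence i: "i < dim A" by (simp add: unlift_def)
    have "0 \<le> v i + liftu u i" using vc i un.prems by (auto simp: validJ_def normJ_def)
    moreover have "0 \<le> v i" using vv i un.prems by (auto simp: validJ_def)
    ultimately show "map int (unlift (dim A) (normJ J (\<lambda>i. v i + liftu u i))) ! i = vadd (unlift (dim A) v) u ! i"
      using i lu un.prems by (simp add: unlift_def vadd_def normJ_def liftu_def)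
  qed
  then have "step_ok A (q, unlift (dim A) v) [label t1]" using t1(2) un(2) by (auto simp: step_ok_def)
  moreover have "is_config A (q, unlift (dim A) v)" using vv by (simp add: is_config_def validJ_def unlift_def)
  ultimately show ?case using t1
    by (intro exI[of _ "Node (q, unlift (dim A) v) [t1]"]) auto
next
  case (fk q v q1 q2 n)
  then obtain t1 t2 where t1: "deduction_tree A t1" "label t1 = (q1, unlift (dim A) v)"
    "leaf_covering Ql t1" "height t1 \<le> n"
    and t2: "deduction_tree A t2" "label t2 = (q2, unlift (dim A) v)"
    "leaf_covering Ql t2" "height t2 \<le> n" by blast
  have "is_config A (q, unlift (dim A) v)" using fk(1) by (simp add: is_config_def validJ_def unlift_def)
  then show ?case using t1 t2 fk(2)
    by (intro exI[of _ "Node (q, unlift (dim A) v) [t1, t2]"]) (auto simp: step_ok_def)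
next
  case (sp q v q1 q2 n v1 v2)
  then obtain t1 t2 where t1: "deduction_tree A t1" "label t1 = (q1, unlift (dim A) v1)"
    "leaf_covering Ql t1" "height t1 \<le> n"
    and t2: "deduction_tree A t2" "label t2 = (q2, unlift (dim A) v2)"
    "leaf_covering Ql t2" "height t2 \<le> n" by blast
  have vv1: "validJ A J q1 v1" using \<open>T A Ql J n q1 v1\<close> by (rule T_valid)
  have vv2: "validJ A J q2 v2" using \<open>T A Ql J n q2 v2\<close> by (rule T_valid)
  have "map2 (+) (unlift (dim A) v1) (unlift (dim A) v2) = unlift (dim A) v"
  proof (rule nth_equalityI)
    fix i assume "i < length (map2 (+) (unlift (dim A) v1) (unlift (dim A) v2))"
    hence i: "i < dim A" by (simp add: unlift_def)
    have "0 \<le> v1 i" "0 \<le> v2 i" using vv1 vv2 i sp.prems by (auto simp: validJ_def)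
    moreover have "v1 i + v2 i = v i" using \<open>\<forall>i. v1 i + v2 i = v i\<close> by blast
    ultimately show "map2 (+) (unlift (dim A) v1) (unlift (dim A) v2) ! i = unlift (dim A) v ! i"
      using i by (simp add: unlift_def nat_add_distrib[symmetric])
  qed (simp add: unlift_def)
  moreover have "is_config A (q, unlift (dim A) v)" using sp(1) by (simp add: is_config_def validJ_def unlift_def)
  ultimately show ?case using t1 t2 sp(2)
    by (intro exI[of _ "Node (q, unlift (dim A) v) [t1, t2]"]) (auto simp: step_ok_def)
qed

lemma max_neg_bound:
  assumes wf: "wf_abvass A" and r: "(q,u,q1) \<in> unary A"
  shows "- int (max_neg A) \<le> liftu u i"
proof (cases "i < length u \<and> u ! i < 0")
  case True
  let ?S = "{nat (- x) | x q u q1. (q, u, q1) \<in> unary A \<and> x \<in> set u \<and> x < 0}"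
  have "?S \<subseteq> (\<lambda>x. nat (-x)) ` (\<Union>((\<lambda>(q,u,q1). set u) ` unary A))" by force
  moreover have "finite (\<Union>((\<lambda>(q,u,q1). set u) ` unary A))"
    using wf by (auto simp: wf_abvass_def)
  ultimately have fS: "finite ?S" by (rule finite_subset[OF _ finite_imageI])
  have "nat (- (u!i)) \<in> ?S" using True r nth_mem by blast
  hence "nat (- (u!i)) \<le> max_neg A" unfolding max_neg_def using fS by (intro Max_ge) auto
  then show ?thesis using True by (simp add: liftu_def)
next
  case False
  then show ?thesis by (auto simp: liftu_def)
qed

theorem lemma5p1:
  fixes A :: "'q abvass" and qr :: 'q and v0 :: "nat list" and Ql :: "'q set"
  assumes "wf_abvass A"
    and "qr \<in> states A" and "length v0 = dim A" and "Ql \<subseteq> states A"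
    and "\<exists>t. deduction_tree A t \<and> label t = (qr, v0) \<and> leaf_covering Ql t"
  shows "\<exists>t. deduction_tree A t \<and> label t = (qr, v0) \<and> leaf_covering Ql t
             \<and> height t \<le> H (dim A) (card (states A)) (max_neg A)"
proof -
  obtain t where t: "deduction_tree A t" "label t = (qr, v0)" "leaf_covering Ql t" using assms(5) by blast
  have T1: "T A Ql {..<dim A} (height t) qr (lift v0)" by (rule to_T[OF assms(1) t(1) t(3) t(2)])
  have fs: "finite (states A)" using assms(1) by (simp add: wf_abvass_def)
  have T2: "T A Ql {..<dim A} (H (dim A) (card (states A)) (max_neg A)) qr (lift v0)"
    by (rule T_main[OF fs max_neg_bound[OF assms(1)] _ _ T1]) auto
  have e: "unlift (dim A) (lift v0) = v0"
    using assms(3) by (auto simp: unlift_def lift_def intro: nth_equalityI)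
  show ?thesis using from_T[OF assms(1) T2 refl] e by simp
qed

end
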